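(* Let $\alpha$ be irrational, $K\ge 2$, and let $0\le N<q_K$ have Ostrowski expansion $N=\sum_{\ell=0}^{K-1}b_\ell q_\ell$ (with $b_\ell:=0$ for $\ell\ge K$). Let $1\le \ell\le K-1$ with $b_\ell\ge1$, and let $\varepsilon_\ell(N):=q_\ell\sum_{k=\ell+1}^{K-1}(-1)^{k+\ell}b_k\delta_k$. Then: (i) $-\frac{1}{a_{\ell+1}}\le -q_\ell\delta_\ell\le \varepsilon_\ell(N)\le \frac{1}{a_{\ell+1}}$; (ii) $1-\lvert\varepsilon_\ell(N)\rvert\gg \frac{1}{a_{\ell+2}}$, and if moreover $b_{\ell+1}\le \frac{a_{\ell+2}}{2}$, then $1-\lvert \varepsilon_\ell(N)\rvert\gg 1$, with absolute implied constants.
   Context: For irrational $\alpha=[a_0;a_1,a_2,\dots]$, $p_k/q_k=[a_0;a_1,\dots,a_k]$ denote the convergents, with $q_{k+1}=a_{k+1}q_k+q_{k-1}$, and $\delta_k:=\lVert q_k\alpha\rVert=\lvert q_k\alpha-p_k\rvert$, where $\lVert x\rVert$ is the distance from $x$ to the nearest integer. The Ostrowski expansion of an integer $0\le N<q_K$ is the unique representation $N=\sum_{\ell=0}^{K-1}b_\ell q_\ell$ with integers $0\le b_\ell\le a_{\ell+1}$, $b_0<a_1$, and $b_{\ell-1}=0$ whenever $b_\ell=a_{\ell+1}$. $f\gg g$ means $f\ge c\,g$ for a positive absolute constant $c$. *)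

theory Defs
  imports Complex_Main
begin

fun cf_rem :: "real \<Rightarrow> nat \<Rightarrow> real" where
  "cf_rem x 0 = x"
| "cf_rem x (Suc n) = 1 / (cf_rem x n - of_int \<lfloor>cf_rem x n\<rfloor>)"

definition cf_a :: "real \<Rightarrow> nat \<Rightarrow> int" where
  "cf_a x n = \<lfloor>cf_rem x n\<rfloor>"

fun cf_q :: "real \<Rightarrow> nat \<Rightarrow> int" where
  "cf_q x 0 = 1"
| "cf_q x (Suc 0) = cf_a x 1"
| "cf_q x (Suc (Suc n)) = cf_a x (Suc (Suc n)) * cf_q x (Suc n) + cf_q x n"

fun cf_p :: "real \<Rightarrow> nat \<Rightarrow> int" where
  "cf_p x 0 = cf_a x 0"
| "cf_p x (Suc 0) = cf_a x 1 * cf_a x 0 + 1"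
| "cf_p x (Suc (Suc n)) = cf_a x (Suc (Suc n)) * cf_p x (Suc n) + cf_p x n"

definition cf_delta :: "real \<Rightarrow> nat \<Rightarrow> real" where
  "cf_delta x k = \<bar>of_int (cf_q x k) * x - of_int (cf_p x k)\<bar>"

text \<open>b is the Ostrowski expansion of N < q_K (digits, extended by 0 for indices \<ge> K).
  By uniqueness of the Ostrowski expansion, these conditions determine b.\<close>
definition ostrowski_digits :: "real \<Rightarrow> nat \<Rightarrow> nat \<Rightarrow> (nat \<Rightarrow> nat) \<Rightarrow> bool" where
  "ostrowski_digits x K N b \<longleftrightarrow>
     int N = (\<Sum>l<K. int (b l) * cf_q x l)
   \<and> (\<forall>l<K. int (b l) \<le> cf_a x (Suc l))
   \<and> int (b 0) < cf_a x 1
   \<and> (\<forall>l. 1 \<le> l \<and> l < K \<and> int (b l) = cf_a x (Suc l) \<longrightarrow> b (l - 1) = 0)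
   \<and> (\<forall>l\<ge>K. b l = 0)"

definition ostrowski_eps :: "real \<Rightarrow> nat \<Rightarrow> (nat \<Rightarrow> nat) \<Rightarrow> nat \<Rightarrow> real" where
  "ostrowski_eps x K b l = of_int (cf_q x l) *
     (\<Sum>k\<in>{l+1..<K}. (-1) ^ (k + l) * real (b k) * cf_delta x k)"

end

theory Submission
  imports Defs
begin

definition ce :: "real \<Rightarrow> nat \<Rightarrow> real" where
  "ce x n = real_of_int (cf_q x n) * x - real_of_int (cf_p x n)"

definition fr :: "real \<Rightarrow> nat \<Rightarrow> real" where
  "fr x n = cf_rem x n - of_int \<lfloor>cf_rem x n\<rfloor>"

lemma rem_irrat: assumes "x \<notin> \<rat>" shows "cf_rem x n \<notin> \<rat>"
proof (induction n)
  case 0 then show ?case using assms by simp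
next
  case (Suc n)
  show ?case
  proof
    assume h: "cf_rem x (Suc n) \<in> \<rat>"
    have i: "inverse (cf_rem x (Suc n)) \<in> \<rat>" using h by (rule Rats_inverse)
    have "cf_rem x n - of_int \<lfloor>cf_rem x n\<rfloor> = inverse (cf_rem x (Suc n))" by simp
    then have "cf_rem x n - of_int \<lfloor>cf_rem x n\<rfloor> \<in> \<rat>" using i by simp
    then have "cf_rem x n - of_int \<lfloor>cf_rem x n\<rfloor> + of_int \<lfloor>cf_rem x n\<rfloor> \<in> \<rat>"
      by (intro Rats_add) auto
    then show False using Suc by simp
  qed
qed

lemma fr_bounds: assumes "x \<notin> \<rat>" shows "0 < fr x n \<and> fr x n < 1"
proof -
  have "cf_rem x n \<noteq> of_int \<lfloor>cf_rem x n\<rfloor>" using rem_irrat[OF assms, of n] by (metis Rats_of_int)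
  moreover have "of_int \<lfloor>cf_rem x n\<rfloor> \<le> cf_rem x n" by simp
  moreover have "cf_rem x n < of_int \<lfloor>cf_rem x n\<rfloor> + 1" by linarith
  ultimately have "of_int \<lfloor>cf_rem x n\<rfloor> < cf_rem x n" "cf_rem x n < of_int \<lfloor>cf_rem x n\<rfloor> + 1"
    by (auto simp: less_le)
  then show ?thesis unfolding fr_def by linarith
qed

lemma rem_Suc: "cf_rem x (Suc n) = 1 / fr x n" by (simp add: fr_def)

declare cf_rem.simps(2)[simp del]

lemma a_ge1: assumes "x \<notin> \<rat>" shows "cf_a x (Suc n) \<ge> 1"
proof -
  have e: "cf_rem x (Suc n) = 1 / fr x n" by (rule rem_Suc)
  have "1 / fr x n > 1" using fr_bounds[OF assms, of n] by (simp add: less_divide_eq)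
  then have "cf_rem x (Suc n) > 1" using e by simp
  then show ?thesis unfolding cf_a_def by linarith
qed

lemma ce0: "ce x 0 = fr x 0" by (simp add: ce_def fr_def cf_a_def)

lemma ce_rec: "ce x (Suc (Suc n)) = cf_a x (Suc (Suc n)) * ce x (Suc n) + ce x n"
  by (simp add: ce_def algebra_simps)

lemma ce_step: assumes "x \<notin> \<rat>"
  shows "ce x (Suc n) = - ce x n * fr x (Suc n) \<and> ce x (Suc (Suc n)) = - ce x (Suc n) * fr x (Suc (Suc n))"
proof (induction n)
  case 0
  have f0: "fr x 0 \<noteq> 0" using fr_bounds[OF assms] by (metis less_irrefl)
  have f1: "fr x (Suc 0) \<noteq> 0" using fr_bounds[OF assms] by (metis less_irrefl)
  have e1: "ce x (Suc 0) = cf_a x (Suc 0) * ce x 0 - 1" by (simp add: ce_def cf_a_def algebra_simps)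
  have r1: "cf_rem x (Suc 0) = 1 / fr x 0" using rem_Suc[of x 0] by simp
  have fr1: "fr x (Suc 0) = cf_rem x (Suc 0) - cf_a x (Suc 0)" by (simp add: fr_def cf_a_def)
  have A: "ce x (Suc 0) = - ce x 0 * fr x (Suc 0)"
    using f0 by (simp add: e1 fr1 r1 ce0 field_simps)
  have r2: "cf_rem x (Suc (Suc 0)) = 1 / fr x (Suc 0)" using rem_Suc[of x "Suc 0"] by simp
  have fr2: "fr x (Suc (Suc 0)) = cf_rem x (Suc (Suc 0)) - cf_a x (Suc (Suc 0))" by (simp add: fr_def cf_a_def)
  have "ce x (Suc (Suc 0)) = cf_a x (Suc (Suc 0)) * ce x (Suc 0) + ce x 0" using ce_rec[of x 0] by simp
  also have "ce x 0 = - ce x (Suc 0) * cf_rem x (Suc (Suc 0))" using A f1 r2 by (simp add: field_simps)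
  finally have "ce x (Suc (Suc 0)) = - ce x (Suc 0) * fr x (Suc (Suc 0))" by (simp add: fr2 algebra_simps)
  then show ?case using A by (simp add: numeral_2_eq_2)
next
  case (Suc n)
  have f1: "fr x (Suc (Suc n)) \<noteq> 0" using fr_bounds[OF assms] by (metis less_irrefl)
  have r: "cf_rem x (Suc (Suc (Suc n))) = 1 / fr x (Suc (Suc n))" using rem_Suc by simp
  have fr2: "fr x (Suc (Suc (Suc n))) = cf_rem x (Suc (Suc (Suc n))) - cf_a x (Suc (Suc (Suc n)))"
    by (simp add: fr_def cf_a_def)
  have "ce x (Suc (Suc (Suc n))) = cf_a x (Suc (Suc (Suc n))) * ce x (Suc (Suc n)) + ce x (Suc n)"
    using ce_rec by simp
  also have "ce x (Suc n) = - ce x (Suc (Suc n)) * cf_rem x (Suc (Suc (Suc n)))"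
    using Suc f1 r by (simp add: field_simps)
  finally have "ce x (Suc (Suc (Suc n))) = - ce x (Suc (Suc n)) * fr x (Suc (Suc (Suc n)))"
    by (simp add: fr2 algebra_simps)
  then show ?case using Suc by simp
qed

lemma ce_sign: assumes "x \<notin> \<rat>" shows "(-1)^n * ce x n > 0"
proof (induction n)
  case 0 then show ?case using fr_bounds[OF assms, of 0] by (simp add: ce0)
next
  case (Suc n)
  have "(-1)^(Suc n) * ce x (Suc n) = ((-1)^n * ce x n) * fr x (Suc n)"
    using ce_step[OF assms, of n] by simp
  then show ?case using Suc fr_bounds[OF assms, of "Suc n"] by simp
qed

lemma delta_ce: assumes "x \<notin> \<rat>" shows "cf_delta x n = (-1)^n * ce x n"
proof -
  have "\<bar>ce x n\<bar> = (-1)^n * ce x n" using ce_sign[OF assms, of n]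
    by (cases "even n") auto
  then show ?thesis by (simp add: cf_delta_def ce_def)
qed

lemma delta_pos: assumes "x \<notin> \<rat>" shows "cf_delta x n > 0"
  using delta_ce[OF assms] ce_sign[OF assms] by simp

lemma delta_rec: assumes "x \<notin> \<rat>"
  shows "cf_delta x n = cf_a x (Suc (Suc n)) * cf_delta x (Suc n) + cf_delta x (Suc (Suc n))"
  using ce_rec[of x n] by (simp add: delta_ce[OF assms] algebra_simps)

lemma delta_step: assumes "x \<notin> \<rat>"
  shows "cf_delta x (Suc n) = cf_delta x n * fr x (Suc n)"
  using ce_step[OF assms, of n] by (simp add: delta_ce[OF assms])

lemma delta_mono: assumes "x \<notin> \<rat>" shows "cf_delta x (Suc n) \<le> cf_delta x n"
  using delta_step[OF assms, of n] delta_pos[OF assms, of n] fr_bounds[OF assms, of "Suc n"]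
  by (simp add: mult_le_cancel_left1)

lemma q_facts: assumes "x \<notin> \<rat>"
  shows "cf_q x n \<ge> 1 \<and> cf_q x (Suc n) \<ge> cf_a x (Suc n) * cf_q x n \<and> cf_q x (Suc n) \<ge> 1"
proof (induction n)
  case 0 then show ?case using a_ge1[OF assms, of 0] by simp
next
  case (Suc n)
  have a: "cf_a x (Suc (Suc n)) \<ge> 1" using a_ge1[OF assms] by simp
  have "cf_q x (Suc (Suc n)) = cf_a x (Suc (Suc n)) * cf_q x (Suc n) + cf_q x n" by simp
  moreover have "cf_a x (Suc (Suc n)) * cf_q x (Suc n) \<ge> cf_q x (Suc n)"
    using a Suc by (simp add: mult_le_cancel_right1)
  ultimately have "cf_q x (Suc (Suc n)) \<ge> cf_a x (Suc (Suc n)) * cf_q x (Suc n)"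
     "cf_q x (Suc (Suc n)) \<ge> 1" using Suc by linarith+
  then show ?case using Suc by simp
qed

lemma q_delta_id: assumes "x \<notin> \<rat>"
  shows "cf_q x (Suc n) * cf_delta x n + cf_q x n * cf_delta x (Suc n) = 1"
proof (induction n)
  case 0
  have d0: "cf_delta x 0 = fr x 0" using delta_ce[OF assms, of 0] by (simp add: ce0)
  have d1: "cf_delta x (Suc 0) = fr x 0 * fr x (Suc 0)" using delta_step[OF assms, of 0] d0 by simp
  have r1: "cf_rem x (Suc 0) = 1 / fr x 0" using rem_Suc[of x 0] by simp
  have fr1: "fr x (Suc 0) = cf_rem x (Suc 0) - cf_a x (Suc 0)" by (simp add: fr_def cf_a_def)
  have f0: "fr x 0 \<noteq> 0" using fr_bounds[OF assms] by (metis less_irrefl)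
  show ?case using f0 by (simp add: d0 d1 fr1 r1 field_simps)
next
  case (Suc n)
  have "cf_q x (Suc (Suc n)) * cf_delta x (Suc n) + cf_q x (Suc n) * cf_delta x (Suc (Suc n))
     = (cf_a x (Suc (Suc n)) * cf_q x (Suc n) + cf_q x n) * cf_delta x (Suc n)
       + cf_q x (Suc n) * (cf_delta x n - cf_a x (Suc (Suc n)) * cf_delta x (Suc n))"
    using delta_rec[OF assms, of n] by simp
  also have "\<dots> = cf_q x (Suc n) * cf_delta x n + cf_q x n * cf_delta x (Suc n)"
    by (simp add: algebra_simps)
  finally show ?case using Suc by simp
qed

lemma arith_main:
 fixes Q Q' A1 a d e g G bb :: real
 assumes Q1: "Q \<ge> 1" and QA: "Q' \<ge> A1*Q" and QQ: "Q' \<ge> Q" and A1: "A1 \<ge> 1" and a1: "a \<ge> 1"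
   and id: "Q'*d + Q*e = 1" and dr: "d = a*e + g" and g0: "0 \<le> g" and ge: "g \<le> e" and e0: "0 < e"
   and G1: "-e \<le> G" and G2: "G \<le> d" and G3: "G \<le> d - (a - bb)*e" and bb1: "bb \<le> a - 1"
 shows "-1/A1 \<le> -Q*d \<and> -Q*d \<le> -Q*G \<and> -Q*G \<le> 1/A1 \<and> 1 - \<bar>-Q*G\<bar> \<ge> (1/8)/a
    \<and> (bb \<le> a/2 \<longrightarrow> 1 - \<bar>-Q*G\<bar> \<ge> 1/8)"
proof -
  have "1*e \<le> a*e" using a1 e0 by (intro mult_right_mono) auto
  then have ed: "e \<le> d" using dr g0 by simp
  have d0: "d > 0" using ed e0 by simp
  have Qp: "Q' > 0" using QQ Q1 by simp
  have Pe0: "Q*e > 0" using Q1 e0 by simp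
  have Qd1: "Q'*d \<le> 1" using id Pe0 by linarith
  have "A1*(Q*d) \<le> Q'*d" using QA d0 by (simp add: mult.assoc[symmetric] mult_right_mono)
  then have AQd: "A1*(Q*d) \<le> 1" using Qd1 by simp
  then have i1: "Q*d \<le> 1/A1" using A1 by (simp add: le_divide_eq mult.commute)
  have i2: "-Q*d \<le> -Q*G" using G2 Q1 by simp
  have Qed: "Q*e \<le> Q*d" using ed Q1 by simp
  have "Q*(-G) \<le> Q*e" using G1 Q1 by (intro mult_left_mono) auto
  then have i3: "-Q*G \<le> Q*e" by simp
  have P1: "(a+1)*(Q*e) \<le> 1"
  proof -
    have "Q*(a*e) \<le> Q'*(a*e)" using QQ a1 e0 by (intro mult_right_mono) auto
    also have "\<dots> \<le> Q'*d" using dr g0 Qp by simp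
    finally show ?thesis using id by (simp add: algebra_simps)
  qed
  have "2*(Q*e) \<le> (a+1)*(Q*e)" using a1 Pe0 by (intro mult_right_mono) auto
  then have Pub: "Q*e \<le> 1/2" using P1 by simp
  have "Q*(Q'*d + Q*e) = Q" using id by simp
  then have F2: "Q'*(Q*d) = Q*(1 - Q*e)" by (simp add: algebra_simps)
  have F3: "2*(a+1)*(Q'*(Q*e)) \<ge> Q"
  proof -
    have "d \<le> (a+1)*e" using dr ge by (simp add: algebra_simps)
    then have X: "Q'*d \<le> Q'*((a+1)*e)" using Qp by simp
    have "Q*e \<le> Q'*d" using QQ ed e0 Q1 by (intro mult_mono) auto
    then have "2*(Q'*d) \<ge> 1" using id by simp
    then have "2*(Q'*((a+1)*e)) \<ge> 1" using X by simp
    then have "Q*1 \<le> Q*(2*(Q'*((a+1)*e)))" using Q1 by (intro mult_left_mono) auto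
    then show ?thesis by (simp add: algebra_simps)
  qed
  have "Q*G \<le> Q*(d - (a-bb)*e)" using G3 Q1 by (intro mult_left_mono) auto
  then have low: "Q*G \<le> Q*d - (a-bb)*(Q*e)" by (simp add: algebra_simps)
  have key: "Q*d - \<beta>*(Q*e) \<le> 1 - \<beta>/(2*(a+1))" if b1: "\<beta> \<ge> 0" "\<beta> \<le> 2*(a+1)" for \<beta>
  proof -
    have "Q'*(Q*d - \<beta>*(Q*e)) = Q - Q*(Q*e) - \<beta>*(Q'*(Q*e))" using F2 by (simp add: algebra_simps)
    also have "\<dots> \<le> Q - \<beta>*(Q'*(Q*e))" using Q1 e0 by simp
    also have "\<beta>*(Q'*(Q*e)) \<ge> \<beta>*(Q/(2*(a+1)))" using F3 b1 a1
      by (intro mult_left_mono) (auto simp: divide_le_eq mult.commute mult.left_commute)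
    then have "Q - \<beta>*(Q'*(Q*e)) \<le> Q*(1 - \<beta>/(2*(a+1)))" by (simp add: algebra_simps)
    also have "\<dots> \<le> Q'*(1 - \<beta>/(2*(a+1)))" using QQ b1 a1 by (intro mult_right_mono) auto
    finally show ?thesis using Qp by simp
  qed
  have a8: "(1/8)/a \<le> 1/8" using a1 by (simp add: divide_le_eq)
  have up: "-Q*G \<le> 1/2" using i3 Pub by simp
  have lo1: "Q*G \<le> 1 - (1/8)/a"
  proof -
    have "1*(Q*e) \<le> (a-bb)*(Q*e)" using bb1 Pe0 by (intro mult_right_mono) auto
    then have "Q*G \<le> Q*d - 1*(Q*e)" using low by simp
    also have "\<dots> \<le> 1 - 1/(2*(a+1))" using key[of 1] a1 by simp
    also have "\<dots> \<le> 1 - (1/8)/a" using a1 by (simp add: field_simps)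
    finally show ?thesis .
  qed
  have lo2: "Q*G \<le> 7/8" if h: "bb \<le> a/2"
  proof -
    have "(a/2)*(Q*e) \<le> (a-bb)*(Q*e)" using h Pe0 by (intro mult_right_mono) auto
    then have "Q*G \<le> Q*d - (a/2)*(Q*e)" using low by simp
    also have "\<dots> \<le> 1 - (a/2)/(2*(a+1))" using key[of "a/2"] a1 by simp
    also have "\<dots> \<le> 7/8" using a1 by (simp add: field_simps)
    finally show ?thesis .
  qed
  have "-1/A1 \<le> -Q*d" using i1 by simp
  moreover have "-Q*G \<le> 1/A1" using i3 Qed i1 by simp
  moreover have "\<bar>-Q*G\<bar> \<le> 1 - (1/8)/a" using up lo1 a8 by (simp add: abs_le_iff)
  moreover have "bb \<le> a/2 \<longrightarrow> \<bar>-Q*G\<bar> \<le> 7/8" using up lo2 by (auto simp: abs_le_iff)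
  ultimately show ?thesis using i2 by simp
qed

definition GG :: "real \<Rightarrow> nat \<Rightarrow> (nat \<Rightarrow> nat) \<Rightarrow> nat \<Rightarrow> real" where
  "GG x K b m = (\<Sum>k\<in>{m..<K}. (-1)^(k-m) * real (b k) * cf_delta x k)"

lemma GG_ge: "K \<le> m \<Longrightarrow> GG x K b m = 0" by (simp add: GG_def)

lemma GG_step: assumes "m < K" shows "GG x K b m = real (b m) * cf_delta x m - GG x K b (Suc m)"
proof -
  have "GG x K b m = real (b m) * cf_delta x m + (\<Sum>k\<in>{Suc m..<K}. (-1)^(k-m) * real (b k) * cf_delta x k)"
    unfolding GG_def using assms by (simp add: sum.atLeast_Suc_lessThan)
  also have "(\<Sum>k\<in>{Suc m..<K}. (-1)^(k-m) * real (b k) * cf_delta x k)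
      = (\<Sum>k\<in>{Suc m..<K}. - ((-1)^(k - Suc m) * real (b k) * cf_delta x k))"
  proof (rule sum.cong)
    fix k assume "k \<in> {Suc m..<K}"
    then have "k - m = Suc (k - Suc m)" by auto
    then show "(-1)^(k-m) * real (b k) * cf_delta x k = - ((-1)^(k - Suc m) * real (b k) * cf_delta x k)"
      by simp
  qed simp
  finally show ?thesis by (simp add: GG_def sum_negf)
qed

lemma GG_bounds: assumes x: "x \<notin> \<rat>" and dig: "\<forall>k<K. int (b k) \<le> cf_a x (Suc k)"
  shows "- cf_delta x (Suc m) \<le> GG x K b (Suc m) \<and> GG x K b (Suc m) \<le> cf_delta x m"
proof (induction m rule: measure_induct_rule[where f="\<lambda>m. K - m"])
  case (less m)
  show ?case
  proof (cases "Suc m < K")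
    case False
    then show ?thesis using GG_ge[of K "Suc m"] delta_pos[OF x] by (simp add: less_imp_le)
  next
    case True
    have IH: "- cf_delta x (Suc (Suc m)) \<le> GG x K b (Suc (Suc m)) \<and> GG x K b (Suc (Suc m)) \<le> cf_delta x (Suc m)"
      using less[of "Suc m"] True by simp
    have st: "GG x K b (Suc m) = real (b (Suc m)) * cf_delta x (Suc m) - GG x K b (Suc (Suc m))"
      using GG_step[OF True] .
    have bb: "real (b (Suc m)) \<le> real_of_int (cf_a x (Suc (Suc m)))" using dig True
      by (metis of_int_le_iff of_int_of_nat_eq)
    have "real (b (Suc m)) * cf_delta x (Suc m) \<le> real_of_int (cf_a x (Suc (Suc m))) * cf_delta x (Suc m)"
      using bb delta_pos[OF x, of "Suc m"] by (intro mult_right_mono) auto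
    moreover have "0 \<le> real (b (Suc m)) * cf_delta x (Suc m)" using delta_pos[OF x, of "Suc m"] by simp
    ultimately show ?thesis using st IH delta_rec[OF x, of m] by linarith
  qed
qed

lemma eps_GG: "ostrowski_eps x K b l = - real_of_int (cf_q x l) * GG x K b (Suc l)"
proof -
  have "(\<Sum>k\<in>{l+1..<K}. (-1) ^ (k + l) * real (b k) * cf_delta x k)
     = (\<Sum>k\<in>{Suc l..<K}. - ((-1)^(k - Suc l) * real (b k) * cf_delta x k))"
  proof (rule sum.cong)
    fix k assume "k \<in> {Suc l..<K}"
    then have h: "k + l = (k - Suc l) + 2*l + 1" by auto
    have "(-1::real)^(k+l) = (-1)^(k - Suc l) * ((-1)^2)^l * (-1)" unfolding h power_add power_mult by simp
    then have "(-1::real)^(k+l) = -((-1)^(k - Suc l))" by simp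
    then show "(-1) ^ (k + l) * real (b k) * cf_delta x k = - ((-1)^(k - Suc l) * real (b k) * cf_delta x k)"
      by simp
  qed simp
  then show ?thesis by (simp add: ostrowski_eps_def GG_def sum_negf)
qed


theorem proposition2:
  shows "\<exists>c>0. \<forall>(x::real) (K::nat) (N::nat) (b::nat \<Rightarrow> nat) (l::nat).
    x \<notin> \<rat> \<and> K \<ge> 2 \<and> int N < cf_q x K \<and> ostrowski_digits x K N b
    \<and> 1 \<le> l \<and> l \<le> K - 1 \<and> b l \<ge> 1 \<longrightarrow>
      (- 1 / real_of_int (cf_a x (l+1)) \<le> - real_of_int (cf_q x l) * cf_delta x l
       \<and> - real_of_int (cf_q x l) * cf_delta x l \<le> ostrowski_eps x K b l
       \<and> ostrowski_eps x K b l \<le> 1 / real_of_int (cf_a x (l+1)))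
    \<and> 1 - \<bar>ostrowski_eps x K b l\<bar> \<ge> c / real_of_int (cf_a x (l+2))
    \<and> (real (b (l+1)) \<le> real_of_int (cf_a x (l+2)) / 2 \<longrightarrow>
         1 - \<bar>ostrowski_eps x K b l\<bar> \<ge> c)"
proof (intro exI[of _ "1/8"] conjI allI impI)
  fix x :: real and K N :: nat and b :: "nat \<Rightarrow> nat" and l :: nat
  assume H: "x \<notin> \<rat> \<and> K \<ge> 2 \<and> int N < cf_q x K \<and> ostrowski_digits x K N b
    \<and> 1 \<le> l \<and> l \<le> K - 1 \<and> b l \<ge> 1"
  then have x: "x \<notin> \<rat>" and lK: "l < K" and l1: "1 \<le> l" and bl: "b l \<ge> 1"
    and od: "ostrowski_digits x K N b" by auto
  have dig: "\<forall>k<K. int (b k) \<le> cf_a x (Suc k)" and bz: "\<forall>k\<ge>K. b k = 0"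
    and cond: "\<forall>k. 1 \<le> k \<and> k < K \<and> int (b k) = cf_a x (Suc k) \<longrightarrow> b (k - 1) = 0"
    using od unfolding ostrowski_digits_def by auto
  define Q where "Q = real_of_int (cf_q x l)"
  define Q' where "Q' = real_of_int (cf_q x (Suc l))"
  define A1 where "A1 = real_of_int (cf_a x (Suc l))"
  define a where "a = real_of_int (cf_a x (Suc (Suc l)))"
  define d where "d = cf_delta x l"
  define e where "e = cf_delta x (Suc l)"
  define g where "g = cf_delta x (Suc (Suc l))"
  define G where "G = GG x K b (Suc l)"
  define bb where "bb = real (b (Suc l))"
  have qf: "cf_q x l \<ge> 1 \<and> cf_q x (Suc l) \<ge> cf_a x (Suc l) * cf_q x l \<and> cf_q x (Suc l) \<ge> 1"
    using q_facts[OF x] by blast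
  have Q1: "Q \<ge> 1" using qf unfolding Q_def by simp
  have QA: "Q' \<ge> A1*Q" using qf unfolding Q'_def A1_def Q_def by (metis of_int_le_iff of_int_mult)
  have A11: "A1 \<ge> 1" using a_ge1[OF x, of l] unfolding A1_def by simp
  have QQ: "Q' \<ge> Q"
  proof -
    have "1*Q \<le> A1*Q" using A11 Q1 by (intro mult_right_mono) auto
    then show ?thesis using QA by simp
  qed
  have a1: "a \<ge> 1" using a_ge1[OF x, of "Suc l"] unfolding a_def by simp
  have id: "Q'*d + Q*e = 1" using q_delta_id[OF x, of l] unfolding Q'_def d_def Q_def e_def by simp
  have dr: "d = a*e + g" using delta_rec[OF x, of l] unfolding d_def a_def e_def g_def by simp
  have g0: "0 \<le> g" using delta_pos[OF x] unfolding g_def by (simp add: less_imp_le)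
  have ge: "g \<le> e" using delta_mono[OF x] unfolding g_def e_def by simp
  have e0: "0 < e" using delta_pos[OF x] unfolding e_def by simp
  have GB: "- e \<le> G \<and> G \<le> d" using GG_bounds[OF x dig, of l] unfolding G_def e_def d_def by simp
  have bb1: "bb \<le> a - 1"
  proof (cases "Suc l < K")
    case True
    have "int (b (Suc l)) \<le> cf_a x (Suc (Suc l))" using dig True by simp
    moreover have "int (b (Suc l)) \<noteq> cf_a x (Suc (Suc l))"
      using cond[rule_format, of "Suc l"] True bl by auto
    ultimately have "int (b (Suc l)) \<le> cf_a x (Suc (Suc l)) - 1" by linarith
    then show ?thesis unfolding bb_def a_def by (metis of_int_1 of_int_diff of_int_le_iff of_int_of_nat_eq)
  next
    case False
    then show ?thesis using bz a1 unfolding bb_def by simp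
  qed
  have G3: "G \<le> d - (a - bb)*e"
  proof (cases "Suc l < K")
    case True
    have st: "G = bb * e - GG x K b (Suc (Suc l))" using GG_step[OF True] unfolding G_def bb_def e_def .
    have "- g \<le> GG x K b (Suc (Suc l))" using GG_bounds[OF x dig, of "Suc l"] unfolding g_def by simp
    then show ?thesis using st dr by (simp add: algebra_simps)
  next
    case False
    then have "G = 0" "bb = 0" using GG_ge bz unfolding G_def bb_def by auto
    then show ?thesis using dr g0 by simp
  qed
  have R: "-1/A1 \<le> -Q*d \<and> -Q*d \<le> -Q*G \<and> -Q*G \<le> 1/A1 \<and> 1 - \<bar>-Q*G\<bar> \<ge> (1/8)/a
    \<and> (bb \<le> a/2 \<longrightarrow> 1 - \<bar>-Q*G\<bar> \<ge> 1/8)"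
    using arith_main[OF Q1 QA QQ A11 a1 id dr g0 ge e0 _ _ G3 bb1] GB by blast
  have eps: "ostrowski_eps x K b l = -Q*G" using eps_GG unfolding Q_def G_def by simp
  show "- 1 / real_of_int (cf_a x (l+1)) \<le> - real_of_int (cf_q x l) * cf_delta x l"
    using R unfolding A1_def Q_def d_def by simp
  show "- real_of_int (cf_q x l) * cf_delta x l \<le> ostrowski_eps x K b l"
    using R eps unfolding Q_def d_def by simp
  show "ostrowski_eps x K b l \<le> 1 / real_of_int (cf_a x (l+1))"
    using R eps unfolding A1_def by simp
  show "1 - \<bar>ostrowski_eps x K b l\<bar> \<ge> (1/8) / real_of_int (cf_a x (l+2))"
    using R eps unfolding a_def by (simp add: numeral_2_eq_2)
  assume "real (b (l+1)) \<le> real_of_int (cf_a x (l+2)) / 2"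
  then show "1 - \<bar>ostrowski_eps x K b l\<bar> \<ge> 1/8"
    using R eps unfolding a_def bb_def by (simp add: numeral_2_eq_2)
qed (simp)

end
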